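(* For BQAP1 and for BQAP2 (with $m,n\ge2$), the objective function value of a solution that is locally optimal with respect to the swap neighborhood and the concurrent swap neighborhood can be arbitrarily bad and can be worse than the average $\mathcal{A}_1(Q,c,d)$ (resp. $\mathcal{A}_2(Q,c,d)$): for every $K>0$ there is an instance and a feasible solution that is locally optimal for both neighborhoods whose objective value exceeds the optimal value by more than $K$ and is strictly greater than the average of the objective value over all feasible solutions.
   Context: $M=\{1,\dots,m\}$, $N=\{1,\dots,n\}$. BQAP1 (minimization): data $Q=(q_{ijk\ell})$ ($m\times n\times m\times n$ real array), real $m\times n$ matrices $c,d$; feasible solutions are pairs $(x,y)$ of $m\times n$ 0-1 matrices with $\sum_{j} x_{ij}=1$ for all $i\in M$ and $\sum_{i} y_{ij}=1$ for all $j\in N$; objective $f_1(x,y)=\sum_{i,k\in M}\sum_{j,\ell\in N} q_{ijk\ell}x_{ij}y_{k\ell}+\sum c_{ij}x_{ij}+\sum d_{ij}y_{ij}$. BQAP2 (minimization): data $Q$ ($m\times m\times n\times n$), $m\times m$ matrix $c$, $n\times n$ matrix $d$; feasible $(x,y)$: $x$ is $m\times m$ 0-1 with unit row sums, $y$ is $n\times n$ 0-1 with unit column sums; objective $f_2(x,y)=\sum_{i,j\in M}\sum_{k,\ell\in N} q_{ijk\ell}x_{ij}y_{k\ell}+\sum c_{ij}x_{ij}+\sum d_{ij}y_{ij}$. $\mathcal{A}_1,\mathcal{A}_2$ are the averages of the objective over all feasible solutions. For a feasible $(x,y)$, $swapx(i,j)$ produces $(x',y)$ where $x'$ agrees with $x$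 except that row $i$ is replaced by the unit vector with its 1 in column $j$; $swapy(i,j)$ produces $(x,y')$ where $y'$ agrees with $y$ except column $j$ is replaced by the unit vector with its 1 in row $i$. The swap neighborhood of $(x,y)$ consists of all solutions obtained by one $swapx(i,j)$ or one $swapy(i,j)$. The concurrent swap neighborhood consists of all solutions $(x',y)$ with $x'$ any feasible $x$-matrix (obtained by applying swaps on $x$ in distinct rows) and all solutions $(x,y')$ with $y'$ any feasible $y$-matrix. A solution is locally optimal for a neighborhood if no solution in its neighborhood has strictly smaller objective value. *)

theory Defs
  imports Complex_Main
begin

text \<open>Matrices are functions nat => nat => real, indices 0-based; an r x c 0-1
matrix is zero outside the index range {0..<r} x {0..<c}.\<close>

definition zo_mat :: "nat \<Rightarrow> nat \<Rightarrow> (nat \<Rightarrow> nat \<Rightarrow> real) \<Rightarrow> bool" where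
  "zo_mat r c x \<longleftrightarrow> (\<forall>i j. x i j \<in> {0, 1}) \<and> (\<forall>i j. (r \<le> i \<or> c \<le> j) \<longrightarrow> x i j = 0)"

definition row_assign :: "nat \<Rightarrow> nat \<Rightarrow> (nat \<Rightarrow> nat \<Rightarrow> real) \<Rightarrow> bool" where
  "row_assign r c x \<longleftrightarrow> zo_mat r c x \<and> (\<forall>i<r. (\<Sum>j<c. x i j) = 1)"

definition col_assign :: "nat \<Rightarrow> nat \<Rightarrow> (nat \<Rightarrow> nat \<Rightarrow> real) \<Rightarrow> bool" where
  "col_assign r c y \<longleftrightarrow> zo_mat r c y \<and> (\<forall>j<c. (\<Sum>i<r. y i j) = 1)"

text \<open>Feasible solutions: x is an rx x cx row-assignment, y an ry x cy column-assignment.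
BQAP1: rx=m, cx=n, ry=m, cy=n. BQAP2: rx=cx=m, ry=cy=n.\<close>
definition sols :: "nat \<Rightarrow> nat \<Rightarrow> nat \<Rightarrow> nat \<Rightarrow>
    ((nat \<Rightarrow> nat \<Rightarrow> real) \<times> (nat \<Rightarrow> nat \<Rightarrow> real)) set" where
  "sols rx cx ry cy = {(x, y). row_assign rx cx x \<and> col_assign ry cy y}"

definition swapx :: "(nat \<Rightarrow> nat \<Rightarrow> real) \<Rightarrow> nat \<Rightarrow> nat \<Rightarrow> (nat \<Rightarrow> nat \<Rightarrow> real)" where
  "swapx x i j = x(i := (\<lambda>l. if l = j then 1 else 0))"

definition swapy :: "(nat \<Rightarrow> nat \<Rightarrow> real) \<Rightarrow> nat \<Rightarrow> nat \<Rightarrow> (nat \<Rightarrow> nat \<Rightarrow> real)" where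
  "swapy y i j = (\<lambda>k l. if l = j then (if k = i then 1 else 0) else y k l)"

definition swap_nbhd :: "nat \<Rightarrow> nat \<Rightarrow> nat \<Rightarrow> nat \<Rightarrow>
    (nat \<Rightarrow> nat \<Rightarrow> real) \<Rightarrow> (nat \<Rightarrow> nat \<Rightarrow> real) \<Rightarrow>
    ((nat \<Rightarrow> nat \<Rightarrow> real) \<times> (nat \<Rightarrow> nat \<Rightarrow> real)) set" where
  "swap_nbhd rx cx ry cy x y =
     {(swapx x i j, y) | i j. i < rx \<and> j < cx} \<union> {(x, swapy y i j) | i j. i < ry \<and> j < cy}"

definition conc_nbhd :: "nat \<Rightarrow> nat \<Rightarrow> nat \<Rightarrow> nat \<Rightarrow>
    (nat \<Rightarrow> nat \<Rightarrow> real) \<Rightarrow> (nat \<Rightarrow> nat \<Rightarrow> real) \<Rightarrow>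
    ((nat \<Rightarrow> nat \<Rightarrow> real) \<times> (nat \<Rightarrow> nat \<Rightarrow> real)) set" where
  "conc_nbhd rx cx ry cy x y =
     {(x', y) | x'. row_assign rx cx x'} \<union> {(x, y') | y'. col_assign ry cy y'}"

definition f1 :: "nat \<Rightarrow> nat \<Rightarrow> (nat \<Rightarrow> nat \<Rightarrow> nat \<Rightarrow> nat \<Rightarrow> real) \<Rightarrow>
    (nat \<Rightarrow> nat \<Rightarrow> real) \<Rightarrow> (nat \<Rightarrow> nat \<Rightarrow> real) \<Rightarrow>
    (nat \<Rightarrow> nat \<Rightarrow> real) \<times> (nat \<Rightarrow> nat \<Rightarrow> real) \<Rightarrow> real" where
  "f1 m n Q c d xy = (case xy of (x, y) \<Rightarrow>
     (\<Sum>i<m. \<Sum>k<m. \<Sum>j<n. \<Sum>l<n. Q i j k l * x i j * y k l)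
     + (\<Sum>i<m. \<Sum>j<n. c i j * x i j) + (\<Sum>i<m. \<Sum>j<n. d i j * y i j))"

definition f2 :: "nat \<Rightarrow> nat \<Rightarrow> (nat \<Rightarrow> nat \<Rightarrow> nat \<Rightarrow> nat \<Rightarrow> real) \<Rightarrow>
    (nat \<Rightarrow> nat \<Rightarrow> real) \<Rightarrow> (nat \<Rightarrow> nat \<Rightarrow> real) \<Rightarrow>
    (nat \<Rightarrow> nat \<Rightarrow> real) \<times> (nat \<Rightarrow> nat \<Rightarrow> real) \<Rightarrow> real" where
  "f2 m n Q c d xy = (case xy of (x, y) \<Rightarrow>
     (\<Sum>i<m. \<Sum>j<m. \<Sum>k<n. \<Sum>l<n. Q i j k l * x i j * y k l)
     + (\<Sum>i<m. \<Sum>j<m. c i j * x i j) + (\<Sum>i<n. \<Sum>j<n. d i j * y i j))"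

definition local_opt :: "('s \<Rightarrow> real) \<Rightarrow> 's set \<Rightarrow> 's \<Rightarrow> bool" where
  "local_opt f N s \<longleftrightarrow> (\<forall>s'\<in>N. \<not> f s' < f s)"

definition opt_val :: "('s \<Rightarrow> real) \<Rightarrow> 's set \<Rightarrow> real" where
  "opt_val f S = Min (f ` S)"

definition avg_val :: "('s \<Rightarrow> real) \<Rightarrow> 's set \<Rightarrow> real" where
  "avg_val f S = (\<Sum>s\<in>S. f s) / real (card S)"

end

theory Submission
  imports Defs
begin

lemma sum_ifP: "(\<Sum>l\<in>S. if P then f l else 0) = (if P then (\<Sum>l\<in>S. f l) else (0::real))"
  by simp
lemma if_and0: "(if P \<and> Q then c else (0::real)) = (if P then if Q then c else 0 else 0)"
  by simp
definition Qk :: "real \<Rightarrow> nat \<Rightarrow> nat \<Rightarrow> nat \<Rightarrow> nat \<Rightarrow> real" where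
 "Qk K i j k l = (if i=0 \<and> j=0 \<and> k=0 \<and> l=0 then -2*K else 0)"
definition ck :: "real \<Rightarrow> nat \<Rightarrow> nat \<Rightarrow> real" where
 "ck K i j = (if i=0 \<and> j=0 then 2*K else 0)"
lemma sumQ: "0<m \<Longrightarrow> 0<n \<Longrightarrow> (\<Sum>i<m. \<Sum>k<m. \<Sum>j<n. \<Sum>l<n. Qk K i j k l * x i j * y k l) = -2*K*x 0 0*y 0 0"
  unfolding Qk_def
  by (simp add: if_distrib[of "\<lambda>t. t * _"] if_and0 sum_ifP cong: if_cong)
lemma sumQ2: "0<m \<Longrightarrow> 0<n \<Longrightarrow> (\<Sum>i<m. \<Sum>j<m. \<Sum>k<n. \<Sum>l<n. Qk K i j k l * x i j * y k l) = -2*K*x 0 0*y 0 0"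
  unfolding Qk_def
  by (simp add: if_distrib[of "\<lambda>t. t * _"] if_and0 sum_ifP cong: if_cong)
lemma sumc: "0<m \<Longrightarrow> 0<n \<Longrightarrow> (\<Sum>i<m. \<Sum>j<n. ck K i j * x i j) = 2*K*x 0 0"
  unfolding ck_def
  by (simp add: if_distrib[of "\<lambda>t. t * _"] if_and0 sum_ifP cong: if_cong)

definition gv :: "real \<Rightarrow> (nat \<Rightarrow> nat \<Rightarrow> real) \<times> (nat \<Rightarrow> nat \<Rightarrow> real) \<Rightarrow> real" where
  "gv K xy = 2*K*fst xy 0 0 + 2*K*snd xy 0 0 - 2*K*fst xy 0 0*snd xy 0 0"

lemma f1_eq: "0<m \<Longrightarrow> 0<n \<Longrightarrow> f1 m n (Qk K) (ck K) (ck K) = gv K"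
  by (rule ext, auto simp: f1_def gv_def sumQ sumc split: prod.splits)

lemma f2_eq: "0<m \<Longrightarrow> 0<n \<Longrightarrow> f2 m n (Qk K) (ck K) (ck K) = gv K"
  by (rule ext, auto simp: f2_def gv_def sumQ2 sumc split: prod.splits)

lemma fin_zo: "finite {x. zo_mat r c x}"
proof -
  let ?h = "\<lambda>x::nat\<Rightarrow>nat\<Rightarrow>real. {(i,j). x i j = 1}"
  have "inj_on ?h {x. zo_mat r c x}"
  proof (rule inj_onI)
    fix x y assume x: "x \<in> {x. zo_mat r c x}" and y: "y \<in> {x. zo_mat r c x}" and e: "?h x = ?h y"
    show "x = y"
    proof (rule ext, rule ext)
      fix i j
      have "x i j \<in> {0,1}" "y i j \<in> {0,1}" using x y by (auto simp: zo_mat_def)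
      moreover have "(x i j = 1) = (y i j = 1)" using e by (auto simp: set_eq_iff)
      ultimately show "x i j = y i j" by auto
    qed
  qed
  moreover have "?h ` {x. zo_mat r c x} \<subseteq> Pow ({..<r} \<times> {..<c})"
    by (auto simp: zo_mat_def) (metis not_le zero_neq_one)+
  ultimately show ?thesis by (rule inj_on_finite) auto
qed

lemma fin_sols: "finite (sols a b c d)"
proof -
  have "sols a b c d \<subseteq> {x. zo_mat a b x} \<times> {y. zo_mat c d y}"
    by (auto simp: sols_def row_assign_def col_assign_def)
  thus ?thesis using fin_zo by (meson finite_SigmaI finite_subset)
qed

lemma gen:
  fixes f :: "'s \<Rightarrow> real"
  assumes "finite S" "s \<in> S" "s0 \<in> S" "\<forall>t\<in>S. f t \<le> f s" "f s0 + K < f s" "0 < K"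
  shows "f s > opt_val f S + K \<and> f s > avg_val f S"
proof
  have "opt_val f S \<le> f s0" unfolding opt_val_def using assms by auto
  thus "f s > opt_val f S + K" using assms by linarith
next
  have "sum f S < sum (\<lambda>_. f s) S"
    using assms by (intro sum_strict_mono_ex1) (auto intro!: bexI[of _ s0])
  hence "sum f S < real (card S) * f s" by simp
  moreover have "card S > 0" using assms card_gt_0_iff by blast
  ultimately show "f s > avg_val f S" unfolding avg_val_def
    by (simp add: divide_less_eq mult.commute)
qed

lemma gv_le: "(x,y) \<in> sols a b c d \<Longrightarrow> 0 < K \<Longrightarrow> gv K (x,y) \<le> 2*K"
proof -
  assume s: "(x,y) \<in> sols a b c d" and K: "0 < K"
  have "x 0 0 \<in> {0,1}" "y 0 0 \<in> {0,1}" using s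
    by (auto simp: sols_def row_assign_def col_assign_def zo_mat_def)
  thus ?thesis using K by (auto simp: gv_def)
qed

lemma lo_swap: "x 0 0 = 1 \<Longrightarrow> y 0 0 = 1 \<Longrightarrow> local_opt (gv K) (swap_nbhd a b c d x y) (x, y)"
  by (auto simp: local_opt_def swap_nbhd_def gv_def)

lemma lo_conc: "x 0 0 = 1 \<Longrightarrow> y 0 0 = 1 \<Longrightarrow> local_opt (gv K) (conc_nbhd a b c d x y) (x, y)"
  by (auto simp: local_opt_def conc_nbhd_def gv_def)

lemma feas_bad: "0 < b \<Longrightarrow> 0 < c \<Longrightarrow>
   ((\<lambda>i j. if i < a \<and> j = 0 then 1 else 0), (\<lambda>i j. if i = 0 \<and> j < d then 1 else 0)) \<in> sols a b c d"
  by (auto simp: sols_def row_assign_def col_assign_def zo_mat_def if_and0 sum_ifP)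

lemma feas_good: "1 < b \<Longrightarrow> 1 < c \<Longrightarrow>
   ((\<lambda>i j. if i < a \<and> j = 1 then 1 else 0), (\<lambda>i j. if i = 1 \<and> j < d then 1 else 0)) \<in> sols a b c d"
  by (auto simp: sols_def row_assign_def col_assign_def zo_mat_def if_and0 sum_ifP)

lemma main:
  assumes "1 < a" "1 < b" "1 < c" "1 < d" "0 < K"
  shows "\<exists>x y. (x, y) \<in> sols a b c d
            \<and> local_opt (gv K) (swap_nbhd a b c d x y) (x, y)
            \<and> local_opt (gv K) (conc_nbhd a b c d x y) (x, y)
            \<and> gv K (x, y) > opt_val (gv K) (sols a b c d) + K
            \<and> gv K (x, y) > avg_val (gv K) (sols a b c d)"
proof -
  define x :: "nat\<Rightarrow>nat\<Rightarrow>real" where "x = (\<lambda>i j. if i < a \<and> j = 0 then 1 else (0::real))"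
  define y :: "nat\<Rightarrow>nat\<Rightarrow>real" where "y = (\<lambda>i j. if i = 0 \<and> j < d then 1 else (0::real))"
  define x' :: "nat\<Rightarrow>nat\<Rightarrow>real" where "x' = (\<lambda>i j. if i < a \<and> j = 1 then 1 else (0::real))"
  define y' :: "nat\<Rightarrow>nat\<Rightarrow>real" where "y' = (\<lambda>i j. if i = 1 \<and> j < d then 1 else (0::real))"
  have s: "(x,y) \<in> sols a b c d" unfolding x_def y_def using assms by (intro feas_bad) auto
  have s0: "(x',y') \<in> sols a b c d" unfolding x'_def y'_def using assms by (intro feas_good) auto
  have x1: "x 0 0 = 1" "y 0 0 = 1" unfolding x_def y_def using assms by auto
  have v: "gv K (x,y) = 2*K" using x1 by (simp add: gv_def)
  have v0: "gv K (x',y') = 0" by (simp add: gv_def x'_def y'_def)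
  have "gv K (x,y) > opt_val (gv K) (sols a b c d) + K \<and> gv K (x,y) > avg_val (gv K) (sols a b c d)"
    apply (rule gen[OF fin_sols s s0])
    using gv_le v v0 assms by auto
  thus ?thesis using s lo_swap lo_conc x1 by blast
qed

theorem theorem5:
  fixes m n :: nat and K :: real
  assumes "2 \<le> m" and "2 \<le> n" and "0 < K"
  shows "(\<exists>Q c d x y. (x, y) \<in> sols m n m n
            \<and> local_opt (f1 m n Q c d) (swap_nbhd m n m n x y) (x, y)
            \<and> local_opt (f1 m n Q c d) (conc_nbhd m n m n x y) (x, y)
            \<and> f1 m n Q c d (x, y) > opt_val (f1 m n Q c d) (sols m n m n) + K
            \<and> f1 m n Q c d (x, y) > avg_val (f1 m n Q c d) (sols m n m n))
       \<and> (\<exists>Q c d x y. (x, y) \<in> sols m m n n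
            \<and> local_opt (f2 m n Q c d) (swap_nbhd m m n n x y) (x, y)
            \<and> local_opt (f2 m n Q c d) (conc_nbhd m m n n x y) (x, y)
            \<and> f2 m n Q c d (x, y) > opt_val (f2 m n Q c d) (sols m m n n) + K
            \<and> f2 m n Q c d (x, y) > avg_val (f2 m n Q c d) (sols m m n n))"
proof
  have e: "f1 m n (Qk K) (ck K) (ck K) = gv K" using assms by (intro f1_eq) auto
  show "\<exists>Q c d x y. (x, y) \<in> sols m n m n
            \<and> local_opt (f1 m n Q c d) (swap_nbhd m n m n x y) (x, y)
            \<and> local_opt (f1 m n Q c d) (conc_nbhd m n m n x y) (x, y)
            \<and> f1 m n Q c d (x, y) > opt_val (f1 m n Q c d) (sols m n m n) + K
            \<and> f1 m n Q c d (x, y) > avg_val (f1 m n Q c d) (sols m n m n)"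
    apply (rule exI[of _ "Qk K"], rule exI[of _ "ck K"], rule exI[of _ "ck K"])
    unfolding e using main[of m n m n K] assms by auto
next
  have e: "f2 m n (Qk K) (ck K) (ck K) = gv K" using assms by (intro f2_eq) auto
  show "\<exists>Q c d x y. (x, y) \<in> sols m m n n
            \<and> local_opt (f2 m n Q c d) (swap_nbhd m m n n x y) (x, y)
            \<and> local_opt (f2 m n Q c d) (conc_nbhd m m n n x y) (x, y)
            \<and> f2 m n Q c d (x, y) > opt_val (f2 m n Q c d) (sols m m n n) + K
            \<and> f2 m n Q c d (x, y) > avg_val (f2 m n Q c d) (sols m m n n)"
    apply (rule exI[of _ "Qk K"], rule exI[of _ "ck K"], rule exI[of _ "ck K"])
    unfolding e using main[of m m n n K] assms by auto
qed

end
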